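(* Let $g:(0,\infty)\to(0,\infty)$ be a positive decreasing function with $\lim_{t\to+\infty}g(t)/g(2t)=2$ (respectively, $\lim_{t\to0+}g(t)/g(2t)=2$). Let $f\in L_\infty(0,\infty)$ be such that $\sup_{n\in\mathbb Z}\frac{1}{2^ng(2^n)}\left|\int_0^{2^n}f(s)\,ds\right|<\infty$. Then the sequence $$\left\{\frac{1}{2^ng(2^n)}\int_{2^n}^{2^{n+1}}f(s)\,ds\right\}_{n\in\mathbb Z}$$ belongs to $\mathrm{Range}(I-S_+)+c_0(\mathbb Z_+)$ (respectively, to $\mathrm{Range}(I-S_+)+c_0(\mathbb Z_-)$).
   Context: $\ell_\infty(\mathbb Z)$ is the space of bounded two-sided complex sequences, $(S_+x)_n=x_{n-1}$, and $\mathrm{Range}(I-S_+)=\{x-S_+x: x\in\ell_\infty(\mathbb Z)\}$. $c_0(\mathbb Z_+)$ denotes the set of $x\in\ell_\infty(\mathbb Z)$ with $x_n\to0$ as $n\to+\infty$, and $c_0(\mathbb Z_-)$ the set of $x\in\ell_\infty(\mathbb Z)$ with $x_n\to0$ as $n\to-\infty$. *)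

theory Defs
  imports "HOL-Analysis.Analysis"
begin

definition linf_Z :: "(int \<Rightarrow> complex) set" where
  "linf_Z = {x. bounded (range x)}"

definition shift_plus :: "(int \<Rightarrow> complex) \<Rightarrow> (int \<Rightarrow> complex)" where
  "shift_plus x = (\<lambda>n. x (n - 1))"

definition range_I_minus_S :: "(int \<Rightarrow> complex) set" where
  "range_I_minus_S = {(\<lambda>n. x n - shift_plus x n) | x. x \<in> linf_Z}"

definition c0_Zplus :: "(int \<Rightarrow> complex) set" where
  "c0_Zplus = {x \<in> linf_Z. (x \<longlongrightarrow> 0) at_top}"

definition c0_Zminus :: "(int \<Rightarrow> complex) set" where
  "c0_Zminus = {x \<in> linf_Z. (x \<longlongrightarrow> 0) at_bot}"

definition seq_set_plus :: "(int \<Rightarrow> complex) set \<Rightarrow> (int \<Rightarrow> complex) set \<Rightarrow> (int \<Rightarrow> complex) set" where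
  "seq_set_plus A B = {(\<lambda>n. a n + b n) | a b. a \<in> A \<and> b \<in> B}"

definition Linf_pos :: "(real \<Rightarrow> complex) set" where
  "Linf_pos = {f. set_borel_measurable lborel {0<..} f \<and>
      (\<exists>C. AE s in lborel. s \<in> {0<..} \<longrightarrow> norm (f s) \<le> C)}"

end

theory Submission
  imports Defs
begin

lemma core:
  fixes F I :: "int \<Rightarrow> complex" and G :: "int \<Rightarrow> real"
  assumes Gp: "\<And>n. G n > 0"
    and FI: "\<And>n. F (n+1) = F n + I n"
    and M: "\<And>n. norm (F n) / G n \<le> M"
    and G2: "\<And>n. G (n+1) / G n \<le> 2"
    and lim: "((\<lambda>n. G n / G (n-1)) \<longlongrightarrow> 1) Fl"
  shows "(\<lambda>n. complex_of_real (1 / G n) * I n) \<in> seq_set_plus range_I_minus_S {x\<in>linf_Z. (x \<longlongrightarrow> 0) Fl}"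
proof -
  define x where "x n = complex_of_real (1 / G n) * F (n+1)" for n
  define r where "r n = G n / G (n-1)" for n
  define c where "c n = complex_of_real (1 / G n) * I n - (x n - x (n-1))" for n
  have M0: "0 \<le> M" using M[of 0] Gp[of 0] by (smt (verit) divide_nonneg_pos norm_ge_zero)
  have xb: "norm (x n) \<le> 2 * M" for n
  proof -
    have "norm (x n) = norm (F (n+1)) / G (n+1) * (G (n+1) / G n)"
      using Gp[of n] Gp[of "n+1"] by (simp add: x_def norm_mult norm_divide field_simps)
    also have "\<dots> \<le> M * 2"
      using M[of "n+1"] G2[of n] Gp[of n] Gp[of "n+1"] M0
      by (intro mult_mono) auto
    finally show ?thesis by simp
  qed
  have rp: "0 < r n" "r n \<le> 2" for n
    using Gp[of n] Gp[of "n-1"] G2[of "n-1"] by (auto simp: r_def)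
  have ceq: "c n = complex_of_real (1 / G n) * F n * complex_of_real (r n - 1)" for n
  proof -
    have "c n = F n * complex_of_real (1 / G (n-1) - 1 / G n)"
      unfolding c_def x_def using FI[of n] FI[of "n-1"]
      by (simp add: algebra_simps of_real_diff)
    also have "1 / G (n-1) - 1 / G n = (1 / G n) * (r n - 1)"
      using Gp[of n] Gp[of "n-1"] by (simp add: r_def field_simps)
    finally show ?thesis by (simp add: algebra_simps)
  qed
  have cb: "norm (c n) \<le> M * \<bar>r n - 1\<bar>" for n
  proof -
    have "norm (c n) = norm (F n) / G n * \<bar>r n - 1\<bar>"
      using Gp[of n] by (simp add: ceq norm_mult norm_divide del: of_real_diff of_real_divide)
    also have "\<dots> \<le> M * \<bar>r n - 1\<bar>" by (intro mult_right_mono M) auto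
    finally show ?thesis .
  qed
  have cb2: "norm (c n) \<le> M" for n
  proof -
    have "\<bar>r n - 1\<bar> \<le> 1" using rp[of n] by auto
    then show ?thesis using cb[of n] M0 by (smt (verit) mult_left_le)
  qed
  have xin: "x \<in> linf_Z" unfolding linf_Z_def bounded_iff using xb by blast
  have cin: "c \<in> linf_Z" unfolding linf_Z_def bounded_iff using cb2 by blast
  have rl: "((\<lambda>n. M * \<bar>r n - 1\<bar>) \<longlongrightarrow> 0) Fl"
  proof -
    have "((\<lambda>n. r n - 1) \<longlongrightarrow> 1 - 1) Fl" using lim unfolding r_def[abs_def]
      by (intro tendsto_diff) auto
    then have "((\<lambda>n. \<bar>r n - 1\<bar>) \<longlongrightarrow> \<bar>0\<bar>) Fl" by (intro tendsto_rabs) auto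
    then have "((\<lambda>n. M * \<bar>r n - 1\<bar>) \<longlongrightarrow> M * 0) Fl" by (intro tendsto_mult) auto
    then show ?thesis by simp
  qed
  have cl: "(c \<longlongrightarrow> 0) Fl"
    by (rule Lim_null_comparison[OF _ rl]) (use cb in auto)
  have "(\<lambda>n. complex_of_real (1 / G n) * I n) = (\<lambda>n. (x n - shift_plus x n) + c n)"
    by (auto simp: c_def shift_plus_def fun_eq_iff)
  moreover have "(\<lambda>n. x n - shift_plus x n) \<in> range_I_minus_S"
    unfolding range_I_minus_S_def using xin by blast
  ultimately show ?thesis unfolding seq_set_plus_def using cin cl
    by (intro CollectI exI[of _ "\<lambda>n. x n - shift_plus x n"] exI[of _ c]) auto
qed
lemma intg_pos:
  fixes f :: "real \<Rightarrow> complex"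
  assumes fL: "f \<in> Linf_pos" and a: "0 < a"
  shows "set_integrable lborel {0<..a} f"
proof -
  from fL obtain C where m: "set_borel_measurable lborel {0<..} f"
    and C: "AE s in lborel. s \<in> {0<..} \<longrightarrow> norm (f s) \<le> C"
    unfolding Linf_pos_def by blast
  have ci: "set_integrable lborel {0..a} (\<lambda>_. C)"
    by (rule borel_integrable_atLeastAtMost') auto
  have ci2: "set_integrable lborel {0<..a} (\<lambda>_. C)"
    by (rule set_integrable_subset[OF ci]) auto
  show ?thesis
  proof (rule set_integrable_bound[OF ci2])
    show "set_borel_measurable lborel {0<..a} f"
      by (rule set_borel_measurable_subset[OF m]) auto
    show "AE x in lborel. x \<in> {0<..a} \<longrightarrow> norm (f x) \<le> norm C"
      using C by eventually_elim auto
  qed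
qed

lemma intg_zero:
  fixes f :: "real \<Rightarrow> complex"
  assumes fL: "f \<in> Linf_pos" and a: "0 < a"
  shows "set_integrable lborel {0..a} f"
proof -
  have i: "set_integrable lborel {0<..a} f" by (rule intg_pos[OF fL a])
  have eq: "(\<lambda>x. indicator {0..a} x *\<^sub>R f x) = (\<lambda>x. indicator {0<..a} x *\<^sub>R f x + indicator {0} x *\<^sub>R f 0)"
    using a by (auto simp: fun_eq_iff indicator_def)
  have "integrable lborel (\<lambda>x. indicator {0<..a} x *\<^sub>R f x + indicator {0::real} x *\<^sub>R f 0)"
    using i unfolding set_integrable_def
    by (intro Bochner_Integration.integrable_add) (auto intro!: integrable_real_mult_indicator)
  then show ?thesis unfolding set_integrable_def eq .
qed
lemma add_int:
  fixes f :: "real \<Rightarrow> complex"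
  assumes fL: "f \<in> Linf_pos" and a: "0 < a" "a \<le> b"
  shows "(LBINT s:{0..b}. f s) = (LBINT s:{0..a}. f s) + (LBINT s:{a..b}. f s)"
proof -
  have ib: "set_integrable lborel {0..b} f" using intg_zero[OF fL] a by auto
  have "(LBINT s:{0..a} \<union> {a..b}. f s) = (LBINT s:{0..a}. f s) + (LBINT s:{a..b}. f s)"
  proof (rule set_integral_Un_AE)
    show "AE x in lborel. \<not> (x \<in> {0..a} \<and> x \<in> {a..b})"
      using AE_lborel_singleton[of a] by eventually_elim auto
    show "set_integrable lborel {0..a} f" using intg_zero[OF fL] a by auto
    show "set_integrable lborel {a..b} f" by (rule set_integrable_subset[OF ib]) (use a in auto)
  qed auto
  moreover have "{0..a} \<union> {a..b} = {0..b}" using a by auto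
  ultimately show ?thesis by simp
qed

lemma int_le_pow: "0 \<le> k \<Longrightarrow> real_of_int k \<le> (2::real) powi k"
proof -
  assume k: "0 \<le> k"
  have "real (nat k) \<le> 2 ^ nat k"
    using less_exp[of "nat k"] by (metis less_imp_le of_nat_le_iff of_nat_numeral of_nat_power)
  then show ?thesis using k by (simp add: power_int_nonneg_exp)
qed

lemma pow_top: "filterlim (\<lambda>n::int. (2::real) powi (n-1)) at_top at_top"
  unfolding filterlim_at_top eventually_at_top_linorder
proof
  fix Z :: real
  show "\<exists>N. \<forall>n\<ge>N. Z \<le> 2 powi (n - 1)"
  proof (intro exI[of _ "max 1 (\<lceil>Z\<rceil> + 1)"] allI impI)
    fix n :: int assume "max 1 (\<lceil>Z\<rceil> + 1) \<le> n"
    then have "Z \<le> real_of_int (n-1)" "0 \<le> n - 1" by linarith+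
    then show "Z \<le> 2 powi (n - 1)" using int_le_pow[of "n-1"] by linarith
  qed
qed

lemma pow_bot: "filterlim (\<lambda>n::int. (2::real) powi (n-1)) (at_right 0) at_bot"
proof -
  have t: "filterlim (\<lambda>n::int. (2::real) powi (1-n)) at_top at_bot"
    unfolding filterlim_at_top eventually_at_bot_linorder
  proof
    fix Z :: real
    show "\<exists>N. \<forall>n\<le>N. Z \<le> 2 powi (1 - n)"
    proof (intro exI[of _ "min 0 (-\<lceil>Z\<rceil>)"] allI impI)
      fix n :: int assume "n \<le> min 0 (-\<lceil>Z\<rceil>)"
      then have "Z \<le> real_of_int (1-n)" "0 \<le> 1 - n" by linarith+
      then show "Z \<le> 2 powi (1 - n)" using int_le_pow[of "1-n"] by linarith
    qed
  qed
  have "filterlim (\<lambda>n::int. inverse ((2::real) powi (1-n))) (at_right 0) at_bot"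
    by (rule filterlim_compose[OF filterlim_inverse_at_right_top t])
  moreover have "(\<lambda>n::int. inverse ((2::real) powi (1-n))) = (\<lambda>n. 2 powi (n-1))"
    by (auto simp: fun_eq_iff simp flip: power_int_minus)
  ultimately show ?thesis by simp
qed

lemma limG:
  fixes g :: "real \<Rightarrow> real"
  assumes gpos: "\<forall>t>0. g t > 0"
    and h: "((\<lambda>t. g t / g (2 * t)) \<longlongrightarrow> 2) Fl'"
    and q: "filterlim (\<lambda>n::int. (2::real) powi (n-1)) Fl' Fl"
  shows "((\<lambda>n. ((2::real) powi n * g (2 powi n)) / (2 powi (n-1) * g (2 powi (n-1)))) \<longlongrightarrow> 1) Fl"
proof -
  have c: "((\<lambda>n. g (2 powi (n-1)) / g (2 * 2 powi (n-1))) \<longlongrightarrow> 2) Fl"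
    by (rule filterlim_compose[OF h q])
  have "((\<lambda>n. 2 / (g (2 powi (n-1)) / g (2 * 2 powi (n-1)))) \<longlongrightarrow> 2 / 2) Fl"
    by (intro tendsto_divide c) auto
  moreover have "(\<lambda>n::int. 2 / (g (2 powi (n-1)) / g (2 * 2 powi (n-1)))) =
     (\<lambda>n. ((2::real) powi n * g (2 powi n)) / (2 powi (n-1) * g (2 powi (n-1))))"
  proof
    fix n :: int
    have e: "2 * (2::real) powi (n-1) = 2 powi n"
      using power_int_minus_mult[of "2::real" n] by (simp add: mult.commute)
    have p: "g (2 powi (n-1)) > 0" "g (2 powi n) > 0" "(2::real) powi (n-1) > 0"
      using gpos by auto
    show "2 / (g (2 powi (n-1)) / g (2 * 2 powi (n-1))) =
      ((2::real) powi n * g (2 powi n)) / (2 powi (n-1) * g (2 powi (n-1)))"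
      unfolding e[symmetric] using p by (simp add: field_simps)
  qed
  ultimately show ?thesis by simp
qed
theorem lemma2p14:
  fixes g :: "real \<Rightarrow> real" and f :: "real \<Rightarrow> complex"
  assumes gpos: "\<forall>t>0. g t > 0"
    and gdec: "\<forall>s t. 0 < s \<longrightarrow> s \<le> t \<longrightarrow> g t \<le> g s"
    and fL: "f \<in> Linf_pos"
    and fsup: "bdd_above (range (\<lambda>n::int.
          norm (LBINT s:{0..(2::real) powi n}. f s) / ((2::real) powi n * g (2 powi n))))"
  shows "(((\<lambda>t. g t / g (2 * t)) \<longlongrightarrow> 2) at_top \<longrightarrow>
           (\<lambda>n::int. complex_of_real (1 / ((2::real) powi n * g (2 powi n))) *
              (LBINT s:{(2::real) powi n..2 powi (n + 1)}. f s))
             \<in> seq_set_plus range_I_minus_S c0_Zplus)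
       \<and> (((\<lambda>t. g t / g (2 * t)) \<longlongrightarrow> 2) (at_right 0) \<longrightarrow>
           (\<lambda>n::int. complex_of_real (1 / ((2::real) powi n * g (2 powi n))) *
              (LBINT s:{(2::real) powi n..2 powi (n + 1)}. f s))
             \<in> seq_set_plus range_I_minus_S c0_Zminus)"
proof -
  define G where "G n = (2::real) powi n * g (2 powi n)" for n :: int
  define F where "F n = (LBINT s:{0..(2::real) powi n}. f s)" for n :: int
  define I where "I n = (LBINT s:{(2::real) powi n..2 powi (n + 1)}. f s)" for n :: int
  have Gp: "G n > 0" for n using gpos by (simp add: G_def)
  have FI: "F (n+1) = F n + I n" for n
    unfolding F_def I_def
    by (rule add_int[OF fL]) (auto simp: power_int_add_1)
  obtain M where M: "norm (F n) / G n \<le> M" for n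
    using fsup unfolding bdd_above_def F_def G_def by auto
  have G2: "G (n+1) / G n \<le> 2" for n
  proof -
    have e: "(2::real) powi (n+1) = 2 * 2 powi n" by (simp add: power_int_add_1 mult.commute)
    have p: "g (2 powi n) > 0" "(2::real) powi n > 0" using gpos by auto
    have "g (2 powi (n+1)) \<le> g (2 powi n)" using gdec p unfolding e by auto
    then show ?thesis unfolding G_def e using p by (simp add: field_simps)
  qed
  have lhs: "(\<lambda>n::int. complex_of_real (1 / ((2::real) powi n * g (2 powi n))) *
              (LBINT s:{(2::real) powi n..2 powi (n + 1)}. f s)) = (\<lambda>n. complex_of_real (1 / G n) * I n)"
    by (simp add: G_def I_def)
  have Gr: "(\<lambda>n. G n / G (n-1)) = (\<lambda>n. ((2::real) powi n * g (2 powi n)) / (2 powi (n-1) * g (2 powi (n-1))))"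
    by (simp add: G_def)
  show ?thesis
  proof (intro conjI impI)
    assume h: "((\<lambda>t. g t / g (2 * t)) \<longlongrightarrow> 2) at_top"
    have "((\<lambda>n. G n / G (n-1)) \<longlongrightarrow> 1) at_top"
      unfolding Gr by (rule limG[OF gpos h pow_top])
    from core[OF Gp FI M G2 this] show "(\<lambda>n::int. complex_of_real (1 / ((2::real) powi n * g (2 powi n))) *
              (LBINT s:{(2::real) powi n..2 powi (n + 1)}. f s)) \<in> seq_set_plus range_I_minus_S c0_Zplus"
      unfolding lhs c0_Zplus_def .
  next
    assume h: "((\<lambda>t. g t / g (2 * t)) \<longlongrightarrow> 2) (at_right 0)"
    have "((\<lambda>n. G n / G (n-1)) \<longlongrightarrow> 1) at_bot"
      unfolding Gr by (rule limG[OF gpos h pow_bot])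
    from core[OF Gp FI M G2 this] show "(\<lambda>n::int. complex_of_real (1 / ((2::real) powi n * g (2 powi n))) *
              (LBINT s:{(2::real) powi n..2 powi (n + 1)}. f s)) \<in> seq_set_plus range_I_minus_S c0_Zminus"
      unfolding lhs c0_Zminus_def .
  qed
qed
end
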